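(* Let $A_1$ be the real $2\times2\times2$ symmetric tensor with $a_{111}=1$, $a_{222}=1$ and all other entries $0$ (associated cubic $x^3+y^3$), and let $A_2$ be the real $2\times2\times2$ symmetric tensor with $a_{111}=1$, $a_{122}=a_{212}=a_{221}=-1$ and all other entries $0$ (associated cubic $x^3-3xy^2$). Then $A_1$ and $A_2$ are not $\operatorname{GL}_2(\mathbb{R})$-equivalent, but they have the same number of eigenpair classes and the same number of zero eigenvalues (both have $3$ eigenpair classes, none with zero eigenvalue).
   Context: Two real symmetric tensors $A,B$ of order $m$ and dimension $n$ are $\operatorname{GL}_n(\mathbb{R})$-equivalent if there is $P=(p_{ij})\in\operatorname{GL}_n(\mathbb{R})$ with $b_{j_1\dots j_m}=\sum_{i_1,\dots,i_m} a_{i_1\dots i_m}p_{i_1j_1}\cdots p_{i_mj_m}$; equivalently, their associated forms $f(\mathbf{x})=\sum a_{i_1\dots i_m}x_{i_1}\cdots x_{i_m}$ are related by $f(\mathbf{x})\mapsto f(P\mathbf{x})$. An eigenpair of $A$ is $(\lambda,\mathbf{x})$ with $\lambda\in\mathbb{C}$, $\mathbf{x}\in\mathbb{C}^n\setminus\{0\}$ and $A\mathbf{x}^{m-1}=\lambda\mathbf{x}$, where $(A\mathbf{x}^{m-1})_i=\sum_{i_2,\dots,i_m}a_{i i_2\dots i_m}x_{i_2}\cdots x_{i_m}$. Two eigenpairs $(\lambda,\mathbf{x}),(\lambda',\mathbf{x}')$ are equivalent if $\lambda'=t^{m-2}\lambda$, $\mathbf{x}'=t\mathbf{x}$ for some $t\in\mathbb{C}\setminus\{0\}$;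 the classes are eigenpair classes. The number of zero eigenvalues is the number of eigenpair classes with eigenvalue $0$. *)

theory Defs
  imports "HOL-Analysis.Analysis" "HOL-Library.Numeral_Type"
begin

text \<open>A real tensor of order m and dimension n = CARD('n) is a function on index
  tuples (lists of length m over the finite index type 'n); only its values on
  lists of length m matter.\<close>

type_synonym 'n rtensor = "'n list \<Rightarrow> real"

definition index_tuples :: "nat \<Rightarrow> ('n::finite) list set" where
  "index_tuples m = {is. length is = m}"

definition symmetric_tensor :: "nat \<Rightarrow> ('n::finite) rtensor \<Rightarrow> bool" where
  "symmetric_tensor m A \<longleftrightarrow>
     (\<forall>is\<in>index_tuples m. \<forall>js. mset js = mset is \<longrightarrow> A js = A is)"

definition GL_equivalent :: "nat \<Rightarrow> ('n::finite) rtensor \<Rightarrow> 'n rtensor \<Rightarrow> bool" where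
  "GL_equivalent m A B \<longleftrightarrow>
     (\<exists>P :: real^'n^'n. invertible P \<and>
        (\<forall>js\<in>index_tuples m.
           B js = (\<Sum>is\<in>index_tuples m. A is * (\<Prod>k<m. P $ (is ! k) $ (js ! k)))))"

definition tensor_apply :: "nat \<Rightarrow> ('n::finite) rtensor \<Rightarrow> complex^'n \<Rightarrow> complex^'n" where
  "tensor_apply m A x = (\<chi> i. \<Sum>is\<in>index_tuples (m - 1).
      complex_of_real (A (i # is)) * (\<Prod>k<m - 1. x $ (is ! k)))"

definition eigenpairs :: "nat \<Rightarrow> ('n::finite) rtensor \<Rightarrow> (complex \<times> (complex^'n)) set" where
  "eigenpairs m A = {(lam, x). x \<noteq> 0 \<and> tensor_apply m A x = lam *s x}"

definition eigenpair_rel :: "nat \<Rightarrow> ('n::finite) rtensor \<Rightarrow> ((complex \<times> (complex^'n)) \<times> (complex \<times> (complex^'n))) set" where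
  "eigenpair_rel m A = {((lam, x), (mu, x')). (lam, x) \<in> eigenpairs m A \<and> (mu, x') \<in> eigenpairs m A \<and>
       (\<exists>t::complex. t \<noteq> 0 \<and> mu = t ^ (m - 2) * lam \<and> x' = t *s x)}"

definition eigenpair_classes :: "nat \<Rightarrow> ('n::finite) rtensor \<Rightarrow> (complex \<times> (complex^'n)) set set" where
  "eigenpair_classes m A = eigenpairs m A // eigenpair_rel m A"

definition zero_eigenvalue_classes :: "nat \<Rightarrow> ('n::finite) rtensor \<Rightarrow> (complex \<times> (complex^'n)) set set" where
  "zero_eigenvalue_classes m A = {C \<in> eigenpair_classes m A. \<exists>x. (0, x) \<in> C}"

text \<open>The two tensors, dimension 2 (index type 2 with indices 0, 1), order 3.\<close>
definition A1 :: "2 rtensor" where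
  "A1 is = (if is = [0,0,0] \<or> is = [1,1,1] then 1 else 0)"

definition A2 :: "2 rtensor" where
  "A2 is = (if is = [0,0,0] then 1
            else if is = [0,1,1] \<or> is = [1,0,1] \<or> is = [1,1,0] then -1 else 0)"

end

theory Submission
  imports Defs
begin

lemma two_cases: "(i::2) = 0 \<or> i = 1"
  using exhaust_2[of i] by auto

lemma UNIV_2': "(UNIV::2 set) = {0,1}" using two_cases by auto

lemma index_tuples_0: "index_tuples 0 = {[]}" by (auto simp: index_tuples_def)

lemma index_tuples_Suc: "index_tuples (Suc n) = (\<lambda>(i,is). i#is) ` (UNIV \<times> index_tuples n)"
  by (auto simp: index_tuples_def image_iff length_Suc_conv)

lemma finite_index_tuples: "finite (index_tuples n :: ('n::finite) list set)"
  by (induction n) (auto simp: index_tuples_0 index_tuples_Suc)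

lemma sum_index_tuples_Suc:
  "(\<Sum>is\<in>index_tuples (Suc n). f is) = (\<Sum>i\<in>(UNIV::('n::finite) set). \<Sum>is\<in>index_tuples n. f (i#is))"
proof -
  have inj: "inj_on (\<lambda>(i::'n,is). i#is) (UNIV \<times> index_tuples n)" by (auto simp: inj_on_def)
  show ?thesis unfolding index_tuples_Suc sum.reindex[OF inj]
    by (simp add: sum.cartesian_product finite_index_tuples split_def)
qed

lemma sum_it3: "(\<Sum>is\<in>index_tuples 3. f is) = (\<Sum>a\<in>(UNIV::2 set). \<Sum>b\<in>(UNIV::2 set). \<Sum>c\<in>(UNIV::2 set). f [a,b,c])"
  by (simp add: numeral_eq_Suc sum_index_tuples_Suc index_tuples_0)

lemma sum_it2: "(\<Sum>is\<in>index_tuples 2. f is) = (\<Sum>a\<in>(UNIV::2 set). \<Sum>b\<in>(UNIV::2 set). f [a,b])"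
  by (simp add: numeral_eq_Suc sum_index_tuples_Suc index_tuples_0)

lemma diff_3_1: "(3::nat) - 1 = 2" by simp

definition vec2 :: "complex \<Rightarrow> complex \<Rightarrow> complex^2" where
  "vec2 a b = (\<chi> i. if i = 0 then a else b)"

lemma vec2_eq: "x = vec2 a b \<longleftrightarrow> x$0 = a \<and> x$1 = b"
  unfolding vec2_def vec_eq_iff using two_cases by auto

lemma vec_ne0: "(x::complex^2) \<noteq> 0 \<longleftrightarrow> x$0 \<noteq> 0 \<or> x$1 \<noteq> 0"
  by (metis (full_types) two_cases vec_eq_iff zero_index)

lemma vec2_comp: "vec2 a b $ 0 = a" "vec2 a b $ 1 = b"
  by (simp_all add: vec2_def)

lemma smul_vec2: "c *s vec2 a b = vec2 (c*a) (c*b)"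
  by (simp add: vec2_eq vec2_comp)

lemma vec2_eq2: "vec2 a b = y \<longleftrightarrow> y$0 = a \<and> y$1 = b"
  using vec2_eq by metis

lemma TA1: "tensor_apply 3 A1 x = vec2 ((x$0)^2) ((x$1)^2)"
  unfolding vec2_eq tensor_apply_def diff_3_1 sum_it2
  by (simp add: UNIV_2' A1_def power2_eq_square lessThan_Suc eval_nat_numeral)

lemma TA2: "tensor_apply 3 A2 x = vec2 ((x$0)^2 - (x$1)^2) (-2*x$0*x$1)"
  unfolding vec2_eq tensor_apply_def diff_3_1 sum_it2
  by (simp add: UNIV_2' A2_def power2_eq_square lessThan_Suc eval_nat_numeral)

lemma equiv_rel: "equiv (eigenpairs m A) (eigenpair_rel m A)"
proof (rule equivI)
  show "refl_on (eigenpairs m A) (eigenpair_rel m A)"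
    unfolding refl_on_def eigenpair_rel_def
    by (auto intro!: exI[of _ 1])
  show "eigenpair_rel m A \<subseteq> eigenpairs m A \<times> eigenpairs m A"
    unfolding eigenpair_rel_def by auto
  show "sym (eigenpair_rel m A)"
  proof (rule symI)
    fix a b assume ab0: "(a,b) \<in> eigenpair_rel m A"
    obtain lam x where a: "a = (lam,x)" by (cases a)
    obtain mu y where b: "b = (mu,y)" by (cases b)
    obtain t where ab: "(lam,x) \<in> eigenpairs m A"
      "(mu,y) \<in> eigenpairs m A" "t \<noteq> 0" "mu = t^(m-2)*lam" "y = t *s x"
      using ab0 unfolding a b eigenpair_rel_def by auto
    have "lam = (inverse t)^(m-2) * mu" using ab by (simp add: power_inverse)
    moreover have "x = inverse t *s y" using ab by (simp add: vector_smult_assoc)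
    ultimately show "(b,a) \<in> eigenpair_rel m A" using ab unfolding a b eigenpair_rel_def
      by (auto intro!: exI[of _ "inverse t"])
  qed
  show "trans (eigenpair_rel m A)"
  proof (rule transI)
    fix a b c assume ab0: "(a,b) \<in> eigenpair_rel m A" and bc0: "(b,c) \<in> eigenpair_rel m A"
    obtain lam x where a: "a = (lam,x)" by (cases a)
    obtain mu y where b: "b = (mu,y)" by (cases b)
    obtain nu z where c: "c = (nu,z)" by (cases c)
    obtain t where ab: "(lam,x) \<in> eigenpairs m A"
      "t \<noteq> 0" "mu = t^(m-2)*lam" "y = t *s x"
      using ab0 unfolding a b eigenpair_rel_def by auto
    obtain s where bc: "(nu,z) \<in> eigenpairs m A"
      "s \<noteq> 0" "nu = s^(m-2)*mu" "z = s *s y"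
      using bc0 unfolding c b eigenpair_rel_def by auto
    have "nu = (s*t)^(m-2) * lam" using ab bc by (simp add: power_mult_distrib)
    moreover have "z = (s*t) *s x" using ab bc by (simp add: vector_smult_assoc)
    ultimately show "(a,c) \<in> eigenpair_rel m A" using ab bc unfolding a c eigenpair_rel_def
      by (auto intro!: exI[of _ "s*t"])
  qed
qed

lemma three_classes:
  assumes eq: "equiv E r" and p: "p1 \<in> E" "p2 \<in> E" "p3 \<in> E"
    and n: "(p1,p2) \<notin> r" "(p1,p3) \<notin> r" "(p2,p3) \<notin> r"
    and cov: "\<And>q. q \<in> E \<Longrightarrow> (p1,q) \<in> r \<or> (p2,q) \<in> r \<or> (p3,q) \<in> r"
  shows "E // r = {r``{p1}, r``{p2}, r``{p3}}" "card (E // r) = 3"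
proof -
  show 1: "E // r = {r``{p1}, r``{p2}, r``{p3}}"
  proof
    show "E // r \<subseteq> {r``{p1}, r``{p2}, r``{p3}}"
    proof
      fix X assume "X \<in> E // r"
      then obtain q where q: "q \<in> E" "X = r``{q}" by (auto elim: quotientE)
      from cov[OF q(1)] show "X \<in> {r``{p1}, r``{p2}, r``{p3}}"
        using eq_equiv_class_iff[OF eq] p q by blast
    qed
    show "{r``{p1}, r``{p2}, r``{p3}} \<subseteq> E // r" using p quotientI by auto
  qed
  have "r``{p1} \<noteq> r``{p2}" "r``{p1} \<noteq> r``{p3}" "r``{p2} \<noteq> r``{p3}"
    using eq_equiv_class_iff[OF eq] p n by blast+
  then show "card (E // r) = 3" unfolding 1 by simp
qed

lemma EP1: "(lam, x) \<in> eigenpairs 3 A1 \<longleftrightarrow> x \<noteq> 0 \<and> (x$0)^2 = lam * x$0 \<and> (x$1)^2 = lam * x$1"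
  unfolding eigenpairs_def TA1 by (auto simp: vec2_eq2)

lemma EP2: "(lam, x) \<in> eigenpairs 3 A2 \<longleftrightarrow> x \<noteq> 0 \<and> (x$0)^2 - (x$1)^2 = lam * x$0 \<and> -2*x$0*x$1 = lam * x$1"
  unfolding eigenpairs_def TA2 by (auto simp: vec2_eq2)


lemma cube_inj: assumes "(q::real)^3 = s^3" shows "q = s"
proof -
  have "(q-s)*(q^2+q * s+s^2) = 0" using assms by (simp add: algebra_simps power2_eq_square power3_eq_cube)
  moreover have "2*(q^2+q * s+s^2) = q^2 + s^2 + (q+s)^2" by (simp add: algebra_simps power2_eq_square)
  moreover have "q^2 + s^2 + (q+s)^2 = 0 \<Longrightarrow> q = s"
    by (smt (verit) zero_le_power2 power2_eq_square zero_eq_power2)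
  ultimately show ?thesis by auto
qed
lemma alg: fixes p q r s :: real
  assumes "p^3+r^3=1" "p^2*q + r^2 * s = 0" "p*q^2 + r * s^2 = -1" "q^3+s^3 = 0"
  shows False
proof -
  have "q^3 = (-s)^3" using assms(4) by simp
  then have qs: "q = -s" by (rule cube_inj)
  then have "q*(p^2 - r^2) = 0" using assms(2) by (simp add: algebra_simps)
  moreover have "q \<noteq> 0" using assms(3) qs by auto
  ultimately have "p^2 = r^2" by simp
  then have "p = r \<or> p = -r" by (simp add: power2_eq_iff)
  moreover have "p \<noteq> -r" using assms(1) by auto
  ultimately have pr: "p = r" by simp
  have "2*p*q^2 = -1" using assms(3) pr qs by (simp add: algebra_simps)
  then have "p < 0" by (smt (verit) mult_nonneg_nonneg zero_le_power2)
  moreover have "2*p^3 = 1" using assms(1) pr by simp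
  ultimately show False by (smt (verit) power_less_zero_eq zero_less_numeral odd_numeral)
qed

lemma rel_rep: assumes "(1,v) \<in> eigenpairs 3 A" "(lam, lam *s v) \<in> eigenpairs 3 A" "lam \<noteq> 0"
  shows "((1,v),(lam, lam *s v)) \<in> eigenpair_rel 3 A"
  using assms unfolding eigenpair_rel_def by (auto intro!: exI[of _ lam])

lemma not_rel: assumes "((1,v),(1,w)) \<in> eigenpair_rel 3 A" shows "v = w"
  using assms unfolding eigenpair_rel_def by auto

lemma cov1: assumes "(lam,x) \<in> eigenpairs 3 A1"
  shows "lam \<noteq> 0 \<and> (x = lam *s vec2 1 0 \<or> x = lam *s vec2 0 1 \<or> x = lam *s vec2 1 1)"
proof -
  have h: "x \<noteq> 0" "(x$0)^2 = lam * x$0" "(x$1)^2 = lam * x$1" using assms EP1 by auto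
  have a: "x$0 = 0 \<or> x$0 = lam" using h(2) by (metis mult_right_cancel power2_eq_square)
  have b: "x$1 = 0 \<or> x$1 = lam" using h(3) by (metis mult_right_cancel power2_eq_square)
  have nz: "x$0 \<noteq> 0 \<or> x$1 \<noteq> 0" using h(1) vec_ne0 by auto
  have "lam \<noteq> 0" using a b nz by auto
  then show ?thesis using a b nz by (auto simp: smul_vec2 vec2_eq)
qed

definition rt3 :: complex where "rt3 = complex_of_real (sqrt 3)"

lemma rt3_sq: "rt3^2 = 3"
  unfolding rt3_def by (simp flip: of_real_power)

lemma cov2: assumes "(lam,x) \<in> eigenpairs 3 A2"
  shows "lam \<noteq> 0 \<and> (x = lam *s vec2 1 0 \<or> x = lam *s vec2 (-1/2) (rt3/2) \<or> x = lam *s vec2 (-1/2) (-rt3/2))"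
proof -
  have h: "x \<noteq> 0" "(x$0)^2 - (x$1)^2 = lam * x$0" "-2*x$0*x$1 = lam * x$1" using assms EP2 by auto
  have nz: "x$0 \<noteq> 0 \<or> x$1 \<noteq> 0" using h(1) vec_ne0 by auto
  show ?thesis
  proof (cases "x$1 = 0")
    case True
    then have "x$0 \<noteq> 0" using nz by auto
    moreover have "(x$0)^2 = lam * x$0" using h(2) True by simp
    ultimately have "x$0 = lam" by (metis mult_right_cancel power2_eq_square)
    then show ?thesis using True \<open>x$0 \<noteq> 0\<close> by (auto simp: smul_vec2 vec2_eq)
  next
    case False
    have "x$1 * (2*x$0 + lam) = 0" using h(3) by (simp add: algebra_simps add_eq_0_iff) (metis minus_equation_iff)
    then have "2*x$0 + lam = 0" using False by simp
    then have x0: "x$0 = -lam/2" by (simp add: field_simps eq_neg_iff_add_eq_0 add.commute)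
    have x1: "(x$1)^2 = 3*lam^2/4" using h(2) unfolding x0 by (simp add: field_simps power2_eq_square)
    have "lam \<noteq> 0" using x1 False by auto
    have "(x$1 - lam * rt3/2) * (x$1 + lam * rt3/2) = (x$1)^2 - lam^2 * rt3^2/4"
      by (simp add: algebra_simps power2_eq_square)
    also have "\<dots> = 0" using x1 rt3_sq by simp
    finally have "(x$1 - lam * rt3/2) * (x$1 + lam * rt3/2) = 0" .
    then have "x$1 - lam * rt3/2 = 0 \<or> x$1 + lam * rt3/2 = 0" by (simp only: mult_eq_0_iff)
    then have "x$1 = lam * rt3/2 \<or> x$1 = -(lam * rt3/2)"
      by (metis right_minus_eq eq_neg_iff_add_eq_0)
    then show ?thesis using x0 \<open>lam \<noteq> 0\<close> by (auto simp: smul_vec2 vec2_eq)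
  qed
qed

lemma classes1: "card (eigenpair_classes 3 A1) = 3"
proof -
  let ?r = "eigenpair_rel 3 A1"
  have m: "(1, vec2 1 0) \<in> eigenpairs 3 A1" "(1, vec2 0 1) \<in> eigenpairs 3 A1" "(1, vec2 1 1) \<in> eigenpairs 3 A1"
    by (auto simp: EP1 vec_ne0 vec2_comp)
  have d: "vec2 1 0 \<noteq> vec2 0 1" "vec2 1 0 \<noteq> vec2 1 1" "vec2 0 1 \<noteq> vec2 1 1"
    by (auto simp: vec2_eq vec2_comp)
  have n: "((1, vec2 1 0), (1, vec2 0 1)) \<notin> ?r" "((1, vec2 1 0), (1, vec2 1 1)) \<notin> ?r"
     "((1, vec2 0 1), (1, vec2 1 1)) \<notin> ?r"
    using not_rel d by metis+
  have cov: "((1, vec2 1 0), q) \<in> ?r \<or> ((1, vec2 0 1), q) \<in> ?r \<or> ((1, vec2 1 1), q) \<in> ?r"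
    if q: "q \<in> eigenpairs 3 A1" for q
  proof -
    obtain lam x where qq: "q = (lam,x)" by (cases q)
    have "(lam,x) \<in> eigenpairs 3 A1" using q qq by simp
    from cov1[OF this] rel_rep[OF m(1), of lam] rel_rep[OF m(2), of lam] rel_rep[OF m(3), of lam]
      \<open>(lam,x) \<in> eigenpairs 3 A1\<close>
    show ?thesis unfolding qq by auto
  qed
  show ?thesis unfolding eigenpair_classes_def
    by (rule three_classes(2)[OF equiv_rel m n cov])
qed

lemma classes2: "card (eigenpair_classes 3 A2) = 3"
proof -
  let ?r = "eigenpair_rel 3 A2"
  let ?v1 = "vec2 1 0" and ?v2 = "vec2 (-1/2) (rt3/2)" and ?v3 = "vec2 (-1/2) (-rt3/2)"
  have r0: "rt3 \<noteq> 0" using rt3_sq by auto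
  have m: "(1, ?v1) \<in> eigenpairs 3 A2" "(1, ?v2) \<in> eigenpairs 3 A2" "(1, ?v3) \<in> eigenpairs 3 A2"
    by (auto simp: EP2 vec_ne0 vec2_comp power2_eq_square[symmetric] rt3_sq power_divide)
  have d: "?v1 \<noteq> ?v2" "?v1 \<noteq> ?v3" "?v2 \<noteq> ?v3"
    using r0 by (auto simp: vec2_eq vec2_comp)
  have n: "((1, ?v1), (1, ?v2)) \<notin> ?r" "((1, ?v1), (1, ?v3)) \<notin> ?r"
     "((1, ?v2), (1, ?v3)) \<notin> ?r"
    using not_rel d by metis+
  have cov: "((1, ?v1), q) \<in> ?r \<or> ((1, ?v2), q) \<in> ?r \<or> ((1, ?v3), q) \<in> ?r"
    if q: "q \<in> eigenpairs 3 A2" for q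
  proof -
    obtain lam x where qq: "q = (lam,x)" by (cases q)
    have "(lam,x) \<in> eigenpairs 3 A2" using q qq by simp
    from cov2[OF this] rel_rep[OF m(1), of lam] rel_rep[OF m(2), of lam] rel_rep[OF m(3), of lam]
      \<open>(lam,x) \<in> eigenpairs 3 A2\<close>
    show ?thesis unfolding qq by auto
  qed
  show ?thesis unfolding eigenpair_classes_def
    by (rule three_classes(2)[OF equiv_rel m n cov])
qed

lemma zero_empty: assumes "\<And>lam x. (lam,x) \<in> eigenpairs 3 A \<Longrightarrow> lam \<noteq> 0"
  shows "zero_eigenvalue_classes 3 A = {}"
proof -
  { fix C x assume C: "C \<in> eigenpair_classes 3 A" "(0,x) \<in> C"
    have "C \<subseteq> eigenpairs 3 A" using in_quotient_imp_subset[OF equiv_rel] C(1)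
      unfolding eigenpair_classes_def by blast
    then have False using C(2) assms by blast }
  then show ?thesis unfolding zero_eigenvalue_classes_def by blast
qed

lemma finite_classes: "card (eigenpair_classes 3 A) = 3 \<Longrightarrow> finite (eigenpair_classes 3 A)"
  using card.infinite by fastforce

lemma notGL: "\<not> GL_equivalent 3 A1 A2"
proof
  assume "GL_equivalent 3 A1 A2"
  then obtain P :: "real^2^2" where P: "\<And>js. js \<in> index_tuples 3 \<Longrightarrow>
     A2 js = (\<Sum>is\<in>index_tuples 3. A1 is * (\<Prod>k<3. P $ (is ! k) $ (js ! k)))"
    unfolding GL_equivalent_def by blast
  have e: "A2 js = (\<Sum>a\<in>(UNIV::2 set). \<Sum>b\<in>(UNIV::2 set). \<Sum>c\<in>(UNIV::2 set).
      A1 [a,b,c] * (P $ a $ (js!0) * P $ b $ (js!1) * P $ c $ (js!2)))" if "length js = 3" for js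
    using P[of js] that unfolding sum_it3 by (simp add: index_tuples_def eval_nat_numeral lessThan_Suc mult_ac)
  have "(P$0$0)^3 + (P$1$0)^3 = 1" using e[of "[0,0,0]"]
    by (simp add: UNIV_2' A1_def A2_def power3_eq_cube)
  moreover have "(P$0$0)^2 * P$0$1 + (P$1$0)^2 * P$1$1 = 0" using e[of "[0,0,1]"]
    by (simp add: UNIV_2' A1_def A2_def power2_eq_square)
  moreover have "P$0$0 * (P$0$1)^2 + P$1$0 * (P$1$1)^2 = -1" using e[of "[0,1,1]"]
    by (simp add: UNIV_2' A1_def A2_def power2_eq_square)
  moreover have "(P$0$1)^3 + (P$1$1)^3 = 0" using e[of "[1,1,1]"]
    by (simp add: UNIV_2' A1_def A2_def power3_eq_cube)
  ultimately show False by (rule alg)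
qed

theorem proposition3p2:
  shows "\<not> GL_equivalent 3 A1 A2
    \<and> finite (eigenpair_classes 3 A1) \<and> finite (eigenpair_classes 3 A2)
    \<and> card (eigenpair_classes 3 A1) = card (eigenpair_classes 3 A2)
    \<and> card (zero_eigenvalue_classes 3 A1) = card (zero_eigenvalue_classes 3 A2)
    \<and> card (eigenpair_classes 3 A1) = 3 \<and> card (eigenpair_classes 3 A2) = 3
    \<and> zero_eigenvalue_classes 3 A1 = {} \<and> zero_eigenvalue_classes 3 A2 = {}"
proof -
  have z1: "zero_eigenvalue_classes 3 A1 = {}" by (rule zero_empty) (use cov1 in blast)
  have z2: "zero_eigenvalue_classes 3 A2 = {}" by (rule zero_empty) (use cov2 in blast)
  show ?thesis using notGL classes1 classes2 finite_classes[OF classes1] finite_classes[OF classes2] z1 z2 by simp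
qed

end
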